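(* Assume $(q+1)/d=3$, let $r$ be an integer, $a,b\in\mathbb F_{q^2}^*$, $0\le j_1,j_2<d$, and put $h(X)=1+aX^{1+3j_1}+bX^{2+3j_2}$ and $L_k(X)=1+a\epsilon^{j_1k}X+b\epsilon^{j_2k}X^2$ for $0\le k<d$. Suppose that for every $0\le k<d$ there exist $\tau_k\in\{0,1,2\}$ and $\lambda_k\in\mu_{q+1}$ with $L_k\in\mathcal L_k(2,\tau_k;\lambda_k)$, and that $\gcd(e_k,3)=1$ where $e_k=r-2+\tau_k$. Define $\pi(k)\in\mathbb Z/d\mathbb Z$ by $\lambda_k^3=\epsilon^{\pi(k)}$, and $K_1=\{k:\tau_k=2\}$, $K_2=\{k:\tau_k=1\}$. If $K_1\neq\emptyset$ and $K_2\ne\emptyset$, then $r\equiv-1\pmod3$, $d$ is even, $K_1$ and $K_2$ are the two cosets of $2\mathbb Z/d\mathbb Z$ in $\mathbb Z/d\mathbb Z$, $b^3=-1$, $a=\pm b^{-1}$, $j_1+j_2+1\equiv d/2\pmod d$, $2j_2-j_1+1\equiv d/2\pmod d$, and $\pi(k)+e_kk=rk$ in $\mathbb Z/d\mathbb Z$ for all $k$. Moreover, either $q\equiv5\pmod{18}$ and $h(X)=1+aX^{(q+1)/6}+bX^{(q+1)/3}$, or $q\equiv11\pmod{18}$ and $h(X)=1+aX^{5(q+1)/6}+bX^{2(q+1)/3}$.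
   Context: $q$ is a prime power, $d$ is a positive divisor of $q+1$, and $\epsilon\in\mathbb F_{q^2}^*$ has multiplicative order $d$. $\mu_{q+1}$ is the subgroup of order $q+1$ of $\mathbb F_{q^2}^*$. For $a\in\mathbb F_{q^2}$, $\bar a=a^q$; for $f(X)=\sum_{i=0}^n a_iX^i\in\mathbb F_{q^2}[X]$ with $a_n\neq0$, $\tilde f(X)=\sum_{i=0}^n\bar a_iX^{n-i}$. For $0\le k<d$, $0\le t<(q+1)/d$ and $\lambda\in\mu_{q+1}$: $\mathcal L_k(t,0;\lambda)$ is the set of $L\in\mathbb F_{q^2}[X]$ with $\deg L=t$, $\tilde L=\lambda L$ and $\gcd(L,X^{(q+1)/d}-\epsilon^k)=1$; for an integer $\tau$ with $(q+1)/d-t\le\tau\le t$, $\mathcal L_k(t,\tau;\lambda)$ is the set of $L=P+X^{(q+1)/d-\tau}Q$ with $P,Q\in\mathbb F_{q^2}[X]$, $\deg P=t-\tau$, $\tilde P=\lambda P$, $\deg Q=\tau+t-(q+1)/d$, $\tilde Q=\lambda\epsilon^kQ$, and $\gcd(L,X^{(q+1)/d}-\epsilon^k)=1$. *)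

theory Defs
  imports "HOL-Computational_Algebra.Polynomial" "HOL-Number_Theory.Cong"
begin

text \<open>Ambient field: a finite field 'a with card UNIV = q^2, so 'a is F_{q^2}.
  Conjugation is a |-> a^q.\<close>

definition prime_power :: "nat \<Rightarrow> bool" where
  "prime_power q \<longleftrightarrow> (\<exists>p n. prime p \<and> n > 0 \<and> q = p ^ n)"

definition conjq :: "nat \<Rightarrow> 'a::field \<Rightarrow> 'a" where
  "conjq q a = a ^ q"

definition tildep :: "nat \<Rightarrow> 'a::field poly \<Rightarrow> 'a poly" where
  "tildep q f = (\<Sum>i\<le>degree f. monom (conjq q (coeff f i)) (degree f - i))"

definition mu :: "nat \<Rightarrow> 'a::field set" where
  "mu m = {x. x ^ m = 1}"

definition has_mult_order :: "'a::field \<Rightarrow> nat \<Rightarrow> bool" where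
  "has_mult_order e d \<longleftrightarrow> e \<noteq> 0 \<and> d > 0 \<and> e ^ d = 1 \<and> (\<forall>m. 0 < m \<and> m < d \<longrightarrow> e ^ m \<noteq> 1)"

definition Lset :: "nat \<Rightarrow> nat \<Rightarrow> 'a::field \<Rightarrow> nat \<Rightarrow> nat \<Rightarrow> nat \<Rightarrow> 'a \<Rightarrow> 'a poly set" where
  "Lset q d eps k t tau lam =
    (let n = (q + 1) div d in
     if tau = 0 then
       {L. degree L = t \<and> tildep q L = smult lam L \<and> coprime L (monom 1 n - [:eps ^ k:])}
     else if n \<le> tau + t \<and> tau \<le> t then
       {L. (\<exists>P Q. L = P + monom 1 (n - tau) * Q \<and>
               degree P = t - tau \<and> tildep q P = smult lam P \<and>
               degree Q = tau + t - n \<and> tildep q Q = smult (lam * eps ^ k) Q) \<and>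
           coprime L (monom 1 n - [:eps ^ k:])}
     else {})"

end

theory Submission imports Defs begin

definition Ep :: "'a::field \<Rightarrow> nat \<Rightarrow> int \<Rightarrow> 'a" where
  "Ep eps d z = eps ^ nat (z mod int d)"

lemma pow_mod_d: "(eps::'a::field)^d = 1 \<Longrightarrow> eps^m = eps^(m mod d)"
  by (metis div_mult_mod_eq power_add power_mult power_one mult_1 mult.commute)

lemma Ep_nat:
  assumes "has_mult_order eps d" "[int n = z] (mod int d)"
  shows "Ep eps d z = eps^n"
proof -
  have d: "eps^d = 1" using assms(1) unfolding has_mult_order_def by auto
  have "z mod int d = int n mod int d" using assms(2) unfolding cong_def by simp
  also have "\<dots> = int (n mod d)" by (simp add: of_nat_mod)
  finally have "nat (z mod int d) = n mod d" by simp
  thus ?thesis unfolding Ep_def using pow_mod_d[OF d, of n] by simp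
qed

lemma Ep_pow: "has_mult_order eps d \<Longrightarrow> eps^n = Ep eps d (int n)"
  using Ep_nat[of eps d n "int n"] by simp

lemma Ep_add:
  assumes "has_mult_order eps d"
  shows "Ep eps d (z + w) = Ep eps d z * Ep eps d w"
proof -
  have dp: "d > 0" using assms unfolding has_mult_order_def by auto
  define n1 where "n1 = nat (z mod int d)"
  define n2 where "n2 = nat (w mod int d)"
  have i1: "int n1 = z mod int d" using dp unfolding n1_def by simp
  have i2: "int n2 = w mod int d" using dp unfolding n2_def by simp
  have "[int (n1 + n2) = z + w] (mod int d)"
    unfolding cong_def using i1 i2 by (simp add: mod_add_eq)
  hence "Ep eps d (z + w) = eps^(n1+n2)" using Ep_nat[OF assms] by blast
  thus ?thesis unfolding Ep_def n1_def n2_def by (simp add: power_add)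
qed

lemma Ep_one_iff:
  assumes "has_mult_order eps d"
  shows "Ep eps d z = 1 \<longleftrightarrow> int d dvd z"
proof -
  have dp: "d > 0" and o: "\<forall>m. 0 < m \<and> m < d \<longrightarrow> eps ^ m \<noteq> 1"
    using assms unfolding has_mult_order_def by auto
  define m where "m = nat (z mod int d)"
  have im: "int m = z mod int d" using dp unfolding m_def by simp
  have md: "m < d" using dp im by (metis of_nat_less_iff pos_mod_bound of_nat_0_less_iff)
  have "Ep eps d z = eps ^ m" unfolding Ep_def m_def ..
  moreover have "eps ^ m = 1 \<longleftrightarrow> m = 0" using o md by (cases "m = 0") auto
  moreover have "m = 0 \<longleftrightarrow> int d dvd z" using im by (metis dvd_eq_mod_eq_0 of_nat_eq_0_iff)
  ultimately show ?thesis by simp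
qed

lemma Ep_zero: "has_mult_order eps d \<Longrightarrow> Ep eps d 0 = 1"
  unfolding Ep_def by simp

lemma Ep_nz: "has_mult_order eps d \<Longrightarrow> Ep eps d z \<noteq> 0"
  unfolding Ep_def has_mult_order_def by simp

lemma Ep_neg: "has_mult_order eps d \<Longrightarrow> Ep eps d z * Ep eps d (-z) = 1"
  using Ep_add[of eps d z "-z"] Ep_zero[of eps d] by simp

lemma Ep_eq_iff:
  assumes "has_mult_order eps d"
  shows "Ep eps d z = Ep eps d w \<longleftrightarrow> int d dvd (z - w)"
proof -
  have "Ep eps d z = Ep eps d w * Ep eps d (z - w)"
    using Ep_add[OF assms, of w "z - w"] by simp
  moreover have "Ep eps d w \<noteq> 0" using Ep_nz[OF assms] .
  ultimately show ?thesis using Ep_one_iff[OF assms, of "z - w"] by auto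
qed

lemma Ep_power:
  assumes "has_mult_order eps d"
  shows "(Ep eps d z)^m = Ep eps d (int m * z)"
proof (induction m)
  case 0 thus ?case using Ep_zero[OF assms] by simp
next
  case (Suc m)
  have "Ep eps d (int (Suc m) * z) = Ep eps d (z + int m * z)" by (simp add: algebra_simps)
  thus ?case using Suc Ep_add[OF assms, of z "int m * z"] by simp
qed

lemma Ep_conj:
  assumes "has_mult_order eps d" "d dvd q + 1"
  shows "(Ep eps d z)^q = Ep eps d (-z)"
proof -
  have "(Ep eps d z)^q = Ep eps d (int q * z)" using Ep_power[OF assms(1)] .
  moreover have "int d dvd (int q * z - (-z))"
  proof -
    have "int d dvd int (q+1)" using assms(2) by (simp only: of_nat_dvd_iff)
    hence "int d dvd int (q+1) * z" by simp
    thus ?thesis by (simp add: algebra_simps)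
  qed
  ultimately show ?thesis using Ep_eq_iff[OF assms(1)] by simp
qed

lemma Ep_move:
  assumes "has_mult_order eps d" "x * Ep eps d u = y * Ep eps d v"
  shows "x = y * Ep eps d (v - u)"
proof -
  have "x = x * (Ep eps d u * Ep eps d (-u))" using Ep_neg[OF assms(1)] by simp
  also have "\<dots> = y * Ep eps d v * Ep eps d (-u)" using assms(2) by (simp add: mult.assoc[symmetric])
  also have "\<dots> = y * Ep eps d (v - u)" using Ep_add[OF assms(1), of v "-u"] by (simp add: mult.assoc)
  finally show ?thesis .
qed
lemma tildep_deg0: "degree P = 0 \<Longrightarrow> tildep q P = [:conjq q (coeff P 0):]"
  unfolding tildep_def by (simp add: monom_0)

lemma tildep_deg1: "degree P = 1 \<Longrightarrow> tildep q P = [:conjq q (coeff P 1), conjq q (coeff P 0):]"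
  unfolding tildep_def by (simp add: monom_0 monom_Suc)

lemma Lset_tau2:
  fixes A B lam eps :: "'a::field"
  assumes n: "(q+1) div d = 3" and mem: "[:1, A, B:] \<in> Lset q d eps k 2 2 lam"
  shows "lam = 1 \<and> B^q = eps^k * A \<and> A^q = eps^k * B \<and> coprime [:1,A,B:] (monom 1 3 - [:eps^k:])"
proof -
  from mem obtain P Q where L: "[:1,A,B:] = P + monom 1 1 * Q" and dP: "degree P = 0"
     and tP: "tildep q P = smult lam P" and dQ: "degree Q = 1"
     and tQ: "tildep q Q = smult (lam*eps^k) Q" and cp: "coprime [:1,A,B:] (monom 1 3 - [:eps^k:])"
    unfolding Lset_def Let_def n by auto
  have P1: "coeff P 1 = 0" "coeff P 2 = 0" using dP by (simp_all add: coeff_eq_0)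
  have "coeff [:1,A,B:] 0 = coeff (P + monom 1 1 * Q) 0" using L by simp
  hence c0: "coeff P 0 = 1" by (simp add: coeff_monom_mult)
  have "coeff [:1,A,B:] 1 = coeff (P + monom 1 1 * Q) 1" using L by simp
  hence c1: "coeff Q 0 = A" using P1 by (simp add: coeff_monom_mult)
  have "coeff [:1,A,B:] 2 = coeff (P + monom 1 1 * Q) 2" using L by simp
  hence c2: "coeff Q 1 = B" using P1 by (simp add: coeff_monom_mult numeral_2_eq_2)
  have "coeff (tildep q P) 0 = coeff (smult lam P) 0" using tP by simp
  hence l: "lam = 1" using c0 by (simp add: tildep_deg0[OF dP] conjq_def)
  have "coeff (tildep q Q) 0 = coeff (smult (lam*eps^k) Q) 0" using tQ by simp
  hence e1: "B^q = eps^k * A" using c1 c2 l by (simp add: tildep_deg1[OF dQ] conjq_def)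
  have "coeff (tildep q Q) 1 = coeff (smult (lam*eps^k) Q) 1" using tQ by simp
  hence e2: "A^q = eps^k * B" using c1 c2 l by (simp add: tildep_deg1[OF dQ] conjq_def)
  show ?thesis using l e1 e2 cp by simp
qed

lemma Lset_tau1:
  fixes A B lam eps :: "'a::field"
  assumes n: "(q+1) div d = 3" and mem: "[:1, A, B:] \<in> Lset q d eps k 2 1 lam"
  shows "A^q = lam \<and> lam * A = 1 \<and> B^q = lam * eps^k * B \<and> coprime [:1,A,B:] (monom 1 3 - [:eps^k:])"
proof -
  from mem obtain P Q where L: "[:1,A,B:] = P + monom 1 2 * Q" and dP: "degree P = 1"
     and tP: "tildep q P = smult lam P" and dQ: "degree Q = 0"
     and tQ: "tildep q Q = smult (lam*eps^k) Q" and cp: "coprime [:1,A,B:] (monom 1 3 - [:eps^k:])"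
    unfolding Lset_def Let_def n by auto
  have P1: "coeff P 2 = 0" using dP by (simp_all add: coeff_eq_0)
  have "coeff [:1,A,B:] 0 = coeff (P + monom 1 2 * Q) 0" using L by simp
  hence c0: "coeff P 0 = 1" by (simp add: coeff_monom_mult)
  have "coeff [:1,A,B:] 1 = coeff (P + monom 1 2 * Q) 1" using L by simp
  hence c1: "coeff P 1 = A" by (simp add: coeff_monom_mult)
  have "coeff [:1,A,B:] 2 = coeff (P + monom 1 2 * Q) 2" using L by simp
  hence c2: "coeff Q 0 = B" using P1 by (simp add: coeff_monom_mult numeral_2_eq_2)
  have "coeff (tildep q P) 0 = coeff (smult lam P) 0" using tP by simp
  hence e1: "A^q = lam" using c0 c1 by (simp add: tildep_deg1[OF dP] conjq_def)
  have "coeff (tildep q P) 1 = coeff (smult lam P) 1" using tP by simp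
  hence e2: "lam * A = 1" using c0 c1 by (simp add: tildep_deg1[OF dP] conjq_def)
  have "coeff (tildep q Q) 0 = coeff (smult (lam*eps^k) Q) 0" using tQ by simp
  hence e3: "B^q = lam * eps^k * B" using c2 by (simp add: tildep_deg0[OF dQ] conjq_def)
  show ?thesis using e1 e2 e3 cp by simp
qed
lemma not_coprime_L:
  fixes A B c :: "'a::field"
  assumes "A^3 * c = 1" "A * B * c = 1"
  shows "\<not> coprime [:1, A, B:] (monom 1 3 - [:c:])"
proof
  assume cp: "coprime [:1, A, B:] (monom 1 3 - [:c:])"
  have A0: "A \<noteq> 0" and c0: "c \<noteq> 0" using assms(1) by auto
  have "(A * c) * B = (A * c) * A^2" using assms by (simp add: power2_eq_square power3_eq_cube algebra_simps)
  hence B: "B = A^2" using A0 c0 by simp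
  have m3: "monom (1::'a) 3 = [:0,0,0,1:]" by (simp add: monom_Suc numeral_3_eq_3 monom_0)
  have e1: "c*A*A - c*B = 0" using B by (simp add: power2_eq_square)
  have e2: "c*A*B = 1" using assms by (simp add: algebra_simps)
  have "[:1, A, B:] * [:-c, c*A:] = [:-c, 0, c*A*A - c*B, c*A*B:]"
    by (simp add: algebra_simps)
  also have "\<dots> = [:-c,0,0,1:]" by (simp only: e1 e2)
  finally have "[:1, A, B:] * [:-c, c*A:] = [:-c,0,0,1:]" .
  hence "monom 1 3 - [:c:] = [:1, A, B:] * [:-c, c*A:]" using m3 by simp
  hence "[:1, A, B:] dvd monom 1 3 - [:c:]" by (metis dvd_triv_left)
  hence "is_unit [:1, A, B:]" by (rule coprime_common_divisor[OF cp dvd_refl])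
  moreover have "B \<noteq> 0" using B A0 by simp
  ultimately show False by (simp add: is_unit_iff_degree)
qed
lemma half_int: fixes D x :: int assumes "even D" "D dvd 2*x" "\<not> D dvd x" shows "D dvd x - D div 2"
proof -
  obtain e where De: "D = 2 * e" using assms(1) by blast
  obtain m where "2 * x = D * m" using assms(2) by blast
  hence xm: "x = e * m" using De by simp
  have "odd m"
  proof
    assume "even m"
    then obtain l where "m = 2 * l" by blast
    hence "x = D * l" using xm De by simp
    thus False using assms(3) by simp
  qed
  then obtain l where "m = 2 * l + 1" using oddE by blast
  hence "x - D div 2 = D * l" using xm De by (simp add: algebra_simps)
  thus ?thesis by simp
qed
lemma m012: fixes D m x :: int assumes "0 < D" "x = D*m" "-D < x" "x < 3*D" shows "m = 0 \<or> m = 1 \<or> m = 2"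
proof -
  have "D * (-1) < D * m" using assms by simp
  hence "-1 < m" using assms(1) mult_less_cancel_left_pos by blast
  moreover have "D * m < D * 3" using assms by (simp add: mult.commute)
  hence "m < 3" using assms(1) mult_less_cancel_left_pos by blast
  ultimately show ?thesis by presburger
qed
lemma fin: fixes q d e j1 j2 :: nat
  assumes "q + 1 = 3*d" "d = 2*e" "1+3*j1 = e \<or> 1+3*j1 = 3*e \<or> 1+3*j1 = 5*e" "2+3*j2 = d \<or> 2+3*j2 = 2*d"
  shows "(q mod 18 = 5 \<and> 1+3*j1 = (q+1) div 6 \<and> 2+3*j2 = (q+1) div 3) \<or>
         (q mod 18 = 11 \<and> 1+3*j1 = 5*(q+1) div 6 \<and> 2+3*j2 = 2*(q+1) div 3)"
proof -
  have q6: "q + 1 = 6*e" using assms(1,2) by simp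
  from assms(3,4) show ?thesis
  proof (elim disjE)
    assume h: "1+3*j1 = e" "2+3*j2 = d"
    have qq: "q = 18*j1 + 5" using q6 h(1) by simp
    have "(q+1) div 6 = e" "(q+1) div 3 = 2*e" using q6 by simp_all
    moreover have "q mod 18 = 5" unfolding qq by simp
    ultimately show ?thesis using h assms(2) by simp
  next
    assume h: "1+3*j1 = 3*e" "2+3*j2 = d" hence False by presburger thus ?thesis ..
  next
    assume h: "1+3*j1 = 5*e" "2+3*j2 = d" hence False using assms(2) by presburger thus ?thesis ..
  next
    assume h: "1+3*j1 = e" "2+3*j2 = 2*d" hence False using assms(2) by presburger thus ?thesis ..
  next
    assume h: "1+3*j1 = 3*e" "2+3*j2 = 2*d" hence False by presburger thus ?thesis ..
  next
    assume h: "1+3*j1 = 5*e" "2+3*j2 = 2*d"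
    have "e mod 3 = 2" using h(2) assms(2) by presburger
    then obtain f where ef: "e = 3*f + 2" by (metis div_mult_mod_eq mult.commute)
    have qq: "q = 18*f + 11" using q6 ef by simp
    have "5*(q+1) div 6 = 5*e" "2*(q+1) div 3 = 4*e" using q6 by simp_all
    moreover have "q mod 18 = 11" unfolding qq by simp
    ultimately show ?thesis using h assms(2) by simp
  qed
qed

lemma coprime3: assumes "coprime (x::int) 3" shows "\<not> 3 dvd x"
proof
  assume "3 dvd x"
  hence "is_unit (3::int)" using coprime_common_divisor[OF assms _ dvd_refl] by blast
  thus False by simp
qed

theorem lemma4p10:
  fixes q d :: nat and eps a b :: "'a::{field,finite}" and r :: int and j1 j2 :: nat
    and tau :: "nat \<Rightarrow> nat" and lam :: "nat \<Rightarrow> 'a" and pi :: "nat \<Rightarrow> nat"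
  assumes q: "prime_power q" and card: "card (UNIV :: 'a set) = q ^ 2"
    and d: "d dvd q + 1" and eps: "has_mult_order eps d"
    and three: "(q + 1) div d = 3"
    and ab: "a \<noteq> 0" "b \<noteq> 0" and j: "j1 < d" "j2 < d"
    and Lk: "\<forall>k<d. tau k \<in> {0,1,2} \<and> lam k \<in> mu (q + 1) \<and>
               [:1, a * eps ^ (j1 * k), b * eps ^ (j2 * k):] \<in> Lset q d eps k 2 (tau k) (lam k) \<and>
               coprime (r - 2 + int (tau k)) 3"
    and pidef: "\<forall>k<d. pi k < d \<and> lam k ^ 3 = eps ^ (pi k)"
    and K1: "{k. k < d \<and> tau k = 2} \<noteq> {}"
    and K2: "{k. k < d \<and> tau k = 1} \<noteq> {}"
  shows "[r = -1] (mod 3) \<and> even d \<and>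
    {{k. k < d \<and> tau k = 2}, {k. k < d \<and> tau k = 1}} = {{k. k < d \<and> even k}, {k. k < d \<and> odd k}} \<and>
    b ^ 3 = -1 \<and> (a = inverse b \<or> a = - inverse b) \<and>
    [j1 + j2 + 1 = d div 2] (mod d) \<and>
    [2 * int j2 - int j1 + 1 = int d div 2] (mod int d) \<and>
    (\<forall>k<d. [int (pi k) + (r - 2 + int (tau k)) * int k = r * int k] (mod int d)) \<and>
    ((q mod 18 = 5 \<and> 1 + monom a (1 + 3 * j1) + monom b (2 + 3 * j2)
        = 1 + monom a ((q + 1) div 6) + monom b ((q + 1) div 3)) \<or>
     (q mod 18 = 11 \<and> 1 + monom a (1 + 3 * j1) + monom b (2 + 3 * j2)
        = 1 + monom a (5 * (q + 1) div 6) + monom b (2 * (q + 1) div 3)))"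
proof -
  define E where "E = Ep eps d"
  have dpos: "d > 0" and eps0: "eps \<noteq> 0" using eps unfolding has_mult_order_def by auto
  have q3: "q + 1 = 3 * d" using d three by (metis dvd_mult_div_cancel mult.commute)
  have EA: "E (z + w) = E z * E w" for z w unfolding E_def using Ep_add[OF eps] .
  have Enz: "E z \<noteq> 0" for z unfolding E_def using Ep_nz[OF eps] .
  have E1: "E z = 1 \<longleftrightarrow> int d dvd z" for z unfolding E_def using Ep_one_iff[OF eps] .
  have Eeq: "E z = E w \<longleftrightarrow> int d dvd (z - w)" for z w unfolding E_def using Ep_eq_iff[OF eps] .
  have Epw: "eps ^ n = E (int n)" for n unfolding E_def using Ep_pow[OF eps] .
  have Ecj: "(E z) ^ q = E (- z)" for z unfolding E_def using Ep_conj[OF eps d] .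
  have Emv: "x * E u = y * E v \<Longrightarrow> x = y * E (v - u)" for x y u v unfolding E_def using Ep_move[OF eps] by blast
  have Epower: "(E z)^m = E (int m * z)" for z m unfolding E_def using Ep_power[OF eps] .
  have Eneg: "E z * E (- z) = 1" for z unfolding E_def using Ep_neg[OF eps] .
  define s where "s = 1 + int j1 + int j2"
  define t where "t = 1 - int j1 + 2 * int j2"
  obtain k1 where k1: "k1 < d" "tau k1 = 2" using K1 by auto
  obtain k2 where k2: "k2 < d" "tau k2 = 1" using K2 by auto
  have "coprime r 3" using Lk k1 by (metis add_diff_cancel_left' add.commute diff_add_cancel of_nat_numeral)
  hence r1: "\<not> 3 dvd r" by (rule coprime3)
  have "coprime (r - 1) 3" using Lk k2 by (auto simp: algebra_simps)
  hence r2: "\<not> 3 dvd (r - 1)" by (rule coprime3)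
  have rmod: "r mod 3 = 2" using r1 r2 by presburger
  have tau12: "tau k = 1 \<or> tau k = 2" if "k < d" for k
  proof -
    have "tau k \<in> {0,1,2}" "coprime (r - 2 + int (tau k)) 3" using Lk that by auto
    moreover have "3 dvd r - 2" using rmod by presburger
    hence "\<not> coprime (r - 2) 3" using coprime3 by blast
    ultimately show ?thesis by auto
  qed
  have cjm: "(x * eps ^ n) ^ q = x ^ q * E (- int n)" for x n
    by (simp add: power_mult_distrib Epw Ecj)
  have K1eq: "b^q = a * E (int k * s) \<and> a^q = b * E (int k * s) \<and> lam k = 1 \<and>
     coprime [:1, a*eps^(j1*k), b*eps^(j2*k):] (monom 1 3 - [:eps^k:])" if "k<d" "tau k = 2" for k
  proof -
    have m: "[:1, a*eps^(j1*k), b*eps^(j2*k):] \<in> Lset q d eps k 2 2 (lam k)" using Lk that by auto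
    from Lset_tau2[OF three m] have l: "lam k = 1"
      and e1: "(b*eps^(j2*k))^q = eps^k * (a*eps^(j1*k))"
      and e2: "(a*eps^(j1*k))^q = eps^k*(b*eps^(j2*k))"
      and cp: "coprime [:1, a*eps^(j1*k), b*eps^(j2*k):] (monom 1 3 - [:eps^k:])" by auto
    have "b^q * E (- int (j2*k)) = a * E (int k + int (j1*k))"
      using e1 unfolding cjm by (simp add: Epw EA)
    hence "b^q = a * E (int k + int (j1*k) - (- int (j2*k)))" by (rule Emv)
    moreover have "int k + int (j1*k) - (- int (j2*k)) = int k * s" by (simp add: s_def algebra_simps)
    ultimately have f1: "b^q = a * E (int k * s)" by simp
    have "a^q * E (- int (j1*k)) = b * E (int k + int (j2*k))"
      using e2 unfolding cjm by (simp add: Epw EA)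
    hence "a^q = b * E (int k + int (j2*k) - (- int (j1*k)))" by (rule Emv)
    moreover have "int k + int (j2*k) - (- int (j1*k)) = int k * s" by (simp add: s_def algebra_simps)
    ultimately have f2: "a^q = b * E (int k * s)" by simp
    show ?thesis using f1 f2 l cp by simp
  qed
  have K2eq: "a^q * a = 1 \<and> b^q = a^q * b * E (int k * t) \<and> lam k * (a * eps^(j1*k)) = 1 \<and>
     coprime [:1, a*eps^(j1*k), b*eps^(j2*k):] (monom 1 3 - [:eps^k:])" if "k<d" "tau k = 1" for k
  proof -
    have m: "[:1, a*eps^(j1*k), b*eps^(j2*k):] \<in> Lset q d eps k 2 1 (lam k)" using Lk that by auto
    from Lset_tau1[OF three m] have l1: "(a*eps^(j1*k))^q = lam k"
      and l2: "lam k * (a*eps^(j1*k)) = 1"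
      and e3: "(b*eps^(j2*k))^q = lam k * eps^k * (b*eps^(j2*k))"
      and cp: "coprime [:1, a*eps^(j1*k), b*eps^(j2*k):] (monom 1 3 - [:eps^k:])" by auto
    have "a^q * a = (a^q * E (- int (j1*k))) * (a * E (int (j1*k)))"
      using Eneg[of "int (j1*k)"] by (simp add: algebra_simps)
    also have "\<dots> = lam k * (a * eps^(j1*k))" using l1 unfolding cjm by (simp add: Epw)
    finally have f1: "a^q * a = 1" using l2 by simp
    have ee: "E (- int (j1*k) + int k + int (j2*k)) = E (- int (j1*k)) * E (int k) * E (int (j2*k))"
      by (simp only: EA)
    have "b^q * E (- int (j2*k)) = a^q * b * (E (- int (j1*k)) * E (int k) * E (int (j2*k)))"
      using e3 l1[symmetric] unfolding cjm by (simp add: Epw algebra_simps)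
    hence "b^q * E (- int (j2*k)) = a^q * b * E (- int (j1*k) + int k + int (j2*k))"
      by (simp only: ee)
    hence "b^q = a^q * b * E (- int (j1*k) + int k + int (j2*k) - (- int (j2*k)))" by (rule Emv)
    moreover have "- int (j1*k) + int k + int (j2*k) - (- int (j2*k)) = int k * t" by (simp add: t_def algebra_simps)
    ultimately have f2: "b^q = a^q * b * E (int k * t)" by simp
    show ?thesis using f1 f2 l2 cp by simp
  qed
  have E0: "E 0 = 1" using E1 by simp
  have aq: "a^q = inverse a" using K2eq[OF k2] ab by (simp add: field_simps)
  have bf: "b = inverse a * E (- (int k * s))" if "k < d" "tau k = 2" for k
  proof -
    have "b * E (int k * s) = inverse a * E 0" using K1eq[OF that] aq E0 by simp
    hence "b = inverse a * E (0 - int k * s)" by (rule Emv)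
    thus ?thesis by simp
  qed
  have abE: "a * b = E (- (int k * s))" if "k < d" "tau k = 2" for k
    using bf[OF that] ab by simp
  have a3: "a^3 = E (int k * t - 2 * int k' * s)" if "k' < d" "tau k' = 2" "k < d" "tau k = 1" for k k'
  proof -
    have "a * E (int k' * s) = inverse a * inverse a * E (- (int k' * s)) * E (int k * t)"
      using K1eq[OF that(1,2)] K2eq[OF that(3,4)] aq bf[OF that(1,2)] by (simp add: algebra_simps)
    also have "\<dots> = inverse a * inverse a * E (- (int k' * s) + int k * t)" by (simp only: EA mult.assoc)
    finally have h: "a * E (int k' * s) = inverse a * inverse a * E (- (int k' * s) + int k * t)" .
    have "a^3 * E (int k' * s) = (a * a) * (a * E (int k' * s))" by (simp add: power3_eq_cube algebra_simps)
    also have "\<dots> = 1 * E (- (int k' * s) + int k * t)" unfolding h using ab by (simp add: field_simps)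
    finally have "a^3 = 1 * E (- (int k' * s) + int k * t - int k' * s)" by (rule Emv)
    moreover have "- (int k' * s) + int k * t - int k' * s = int k * t - 2 * int k' * s" by simp
    ultimately show ?thesis by (simp add: mult.commute mult.left_commute)
  qed
  have A3: "(a*eps^(j1*k))^3 * eps^k = a^3 * E (3 * int (j1*k) + int k)" for k
  proof -
    have "(a*eps^(j1*k))^3 * eps^k = a^3 * ((E (int (j1*k)))^3 * E (int k))"
      by (simp add: power_mult_distrib Epw)
    also have "\<dots> = a^3 * E (3 * int (j1*k) + int k)" by (simp only: Epower EA) simp
    finally show ?thesis .
  qed
  have ABc: "(a*eps^(j1*k)) * (b*eps^(j2*k)) * eps^k = a * b * E (int k * s)" for k
  proof -
    have "(a*eps^(j1*k)) * (b*eps^(j2*k)) * eps^k = a * b * (E (int (j1*k)) * E (int (j2*k)) * E (int k))"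
      by (simp add: Epw algebra_simps)
    also have "\<dots> = a * b * E (int (j1*k) + int (j2*k) + int k)" by (simp only: EA)
    also have "int (j1*k) + int (j2*k) + int k = int k * s" by (simp add: s_def algebra_simps)
    finally show ?thesis .
  qed
  have s_not: "\<not> int d dvd s"
  proof
    assume ds: "int d dvd s"
    have "(a*eps^(j1*k2))^3 * eps^k2 = E (int k2 * t - 2 * int k1 * s + (3 * int (j1*k2) + int k2))"
      unfolding A3 a3[OF k1 k2] by (simp only: EA)
    also have "int k2 * t - 2 * int k1 * s + (3 * int (j1*k2) + int k2) = s * (2 * (int k2 - int k1))"
      by (simp add: s_def t_def algebra_simps)
    also have "E (s * (2 * (int k2 - int k1))) = 1" using ds E1 by simp
    finally have h1: "(a*eps^(j1*k2))^3 * eps^k2 = 1" .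
    have "(a*eps^(j1*k2)) * (b*eps^(j2*k2)) * eps^k2 = E (- (int k1 * s) + int k2 * s)"
      unfolding ABc abE[OF k1] by (simp only: EA)
    also have "- (int k1 * s) + int k2 * s = s * (int k2 - int k1)" by (simp add: algebra_simps)
    also have "E (s * (int k2 - int k1)) = 1" using ds E1 by simp
    finally have h2: "(a*eps^(j1*k2)) * (b*eps^(j2*k2)) * eps^k2 = 1" .
    show False using not_coprime_L[OF h1 h2] K2eq[OF k2] by simp
  qed
  have t_not: "\<not> int d dvd t"
  proof
    assume dt: "int d dvd t"
    have "(a*eps^(j1*k1))^3 * eps^k1 = E (int k2 * t - 2 * int k1 * s + (3 * int (j1*k1) + int k1))"
      unfolding A3 a3[OF k1 k2] by (simp only: EA)
    also have "int k2 * t - 2 * int k1 * s + (3 * int (j1*k1) + int k1) = t * (int k2 - int k1)"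
      by (simp add: s_def t_def algebra_simps)
    also have "E (t * (int k2 - int k1)) = 1" using dt E1 by simp
    finally have h1: "(a*eps^(j1*k1))^3 * eps^k1 = 1" .
    have "(a*eps^(j1*k1)) * (b*eps^(j2*k1)) * eps^k1 = E (- (int k1 * s) + int k1 * s)"
      unfolding ABc abE[OF k1] by (simp only: EA)
    also have "\<dots> = 1" using E0 by simp
    finally have h2: "(a*eps^(j1*k1)) * (b*eps^(j2*k1)) * eps^k1 = 1" .
    show False using not_coprime_L[OF h1 h2] K1eq[OF k1] by simp
  qed
  have same: "(tau k = 2 \<longrightarrow> int d dvd (int k - int k') * s) \<and> (tau k = 1 \<longrightarrow> int d dvd (int k - int k') * t)"
    if "k < d" "k' < d" "tau k = tau k'" for k k'
  proof (intro conjI impI)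
    assume "tau k = 2"
    hence "a * E (int k * s) = a * E (int k' * s)" using K1eq[of k] K1eq[of k'] that by auto
    hence "E (int k * s) = E (int k' * s)" using ab by simp
    thus "int d dvd (int k - int k') * s" using Eeq by (simp add: algebra_simps)
  next
    assume "tau k = 1"
    hence "a^q * b * E (int k * t) = a^q * b * E (int k' * t)" using K2eq[of k] K2eq[of k'] that by auto
    moreover have "a^q * b \<noteq> 0" using aq ab by simp
    ultimately have "E (int k * t) = E (int k' * t)" by (metis mult_left_cancel)
    thus "int d dvd (int k - int k') * t" using Eeq by (simp add: algebra_simps)
  qed
  have alt: "tau (Suc k) \<noteq> tau k" if "Suc k < d" for k
  proof
    assume h: "tau (Suc k) = tau k"
    have kd: "k < d" using that by simp
    have sm: "(tau (Suc k) = 2 \<longrightarrow> int d dvd (int (Suc k) - int k) * s) \<and> (tau (Suc k) = 1 \<longrightarrow> int d dvd (int (Suc k) - int k) * t)"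
      using same[OF that kd h] .
    have "tau (Suc k) = 1 \<or> tau (Suc k) = 2" using tau12 that by simp
    thus False
    proof
      assume "tau (Suc k) = 1"
      hence "int d dvd t" using sm by simp
      thus False using t_not by simp
    next
      assume "tau (Suc k) = 2"
      hence "int d dvd s" using sm by simp
      thus False using s_not by simp
    qed
  qed
  have wrap: "tau (d - 1) \<noteq> tau 0"
  proof
    assume h: "tau (d - 1) = tau 0"
    have d1: "d - 1 < d" using dpos by simp
    have sm: "(tau (d - 1) = 2 \<longrightarrow> int d dvd (int (d - 1) - int 0) * s) \<and> (tau (d - 1) = 1 \<longrightarrow> int d dvd (int (d - 1) - int 0) * t)"
      using same[OF d1 dpos h] .
    have i: "int (d - 1) - int 0 = int d - 1" using dpos by simp
    have dv: "int d dvd x" if "int d dvd (int d - 1) * x" for x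
    proof -
      have "int d dvd int d * x - (int d - 1) * x" using that by (simp add: dvd_diff)
      thus ?thesis by (simp add: algebra_simps)
    qed
    have "tau (d - 1) = 1 \<or> tau (d - 1) = 2" using tau12 d1 by simp
    thus False
    proof
      assume "tau (d - 1) = 1"
      hence "int d dvd (int d - 1) * t" using sm i by simp
      thus False using t_not dv by blast
    next
      assume "tau (d - 1) = 2"
      hence "int d dvd (int d - 1) * s" using sm i by simp
      thus False using s_not dv by blast
    qed
  qed
  have par: "k < d \<longrightarrow> (tau k = tau 0 \<longleftrightarrow> even k)" for k
  proof (induction k)
    case 0 thus ?case by simp
  next
    case (Suc k)
    show ?case
    proof
      assume sk: "Suc k < d"
      have "tau k = 1 \<or> tau k = 2" "tau (Suc k) = 1 \<or> tau (Suc k) = 2" "tau 0 = 1 \<or> tau 0 = 2"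
        using tau12 sk by auto
      thus "tau (Suc k) = tau 0 \<longleftrightarrow> even (Suc k)" using Suc alt[OF sk] sk by auto
    qed
  qed
  have evd: "even d"
  proof (rule ccontr)
    assume "odd d"
    hence "even (d - 1)" using dpos by simp
    thus False using par[of "d - 1"] wrap dpos by simp
  qed
  have t12: "tau k = 1 \<longleftrightarrow> tau k \<noteq> tau 0" "tau k = 2 \<longleftrightarrow> tau k = tau 0" if "k < d" "tau 0 = 2" for k
    using tau12[OF that(1)] that(2) by auto
  have t21: "tau k = 1 \<longleftrightarrow> tau k = tau 0" "tau k = 2 \<longleftrightarrow> tau k \<noteq> tau 0" if "k < d" "tau 0 = 1" for k
    using tau12[OF that(1)] that(2) by auto
  have sets: "{{k. k < d \<and> tau k = 2}, {k. k < d \<and> tau k = 1}} = {{k. k < d \<and> even k}, {k. k < d \<and> odd k}}"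
  proof (cases "tau 0 = 2")
    case True
    have "{k. k < d \<and> tau k = 2} = {k. k < d \<and> even k}"
    proof (rule set_eqI)
      fix k show "k \<in> {k. k < d \<and> tau k = 2} \<longleftrightarrow> k \<in> {k. k < d \<and> even k}"
        using t12[OF _ True, of k] par[of k] by auto
    qed
    moreover have "{k. k < d \<and> tau k = 1} = {k. k < d \<and> odd k}"
    proof (rule set_eqI)
      fix k show "k \<in> {k. k < d \<and> tau k = 1} \<longleftrightarrow> k \<in> {k. k < d \<and> odd k}"
        using t12[OF _ True, of k] par[of k] by auto
    qed
    ultimately show ?thesis by simp
  next
    case False
    hence F: "tau 0 = 1" using tau12 dpos by auto
    have "{k. k < d \<and> tau k = 2} = {k. k < d \<and> odd k}"
    proof (rule set_eqI)
      fix k show "k \<in> {k. k < d \<and> tau k = 2} \<longleftrightarrow> k \<in> {k. k < d \<and> odd k}"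
        using t21[OF _ F, of k] par[of k] by auto
    qed
    moreover have "{k. k < d \<and> tau k = 1} = {k. k < d \<and> even k}"
    proof (rule set_eqI)
      fix k show "k \<in> {k. k < d \<and> tau k = 1} \<longleftrightarrow> k \<in> {k. k < d \<and> even k}"
        using t21[OF _ F, of k] par[of k] by auto
    qed
    ultimately show ?thesis by (simp add: insert_commute)
  qed
  have d2: "int d dvd 2 * s \<and> int d dvd 2 * t"
  proof (cases "d = 2")
    case True thus ?thesis by simp
  next
    case False
    hence d4: "3 < d" using evd dpos by presburger
    have e20: "tau 2 = tau 0" using par[of 2] d4 by simp
    have e31: "tau 3 = tau 1" using par[of 3] par[of 1] d4 tau12[of 3] tau12[of 1] tau12[of 0] by auto
    have n10: "tau 1 \<noteq> tau 0" using alt[of 0] d4 by simp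
    have s20: "(tau 2 = 2 \<longrightarrow> int d dvd (int 2 - int 0) * s) \<and> (tau 2 = 1 \<longrightarrow> int d dvd (int 2 - int 0) * t)"
      using same[of 2 0] d4 e20 by simp
    have s31: "(tau 3 = 2 \<longrightarrow> int d dvd (int 3 - int 1) * s) \<and> (tau 3 = 1 \<longrightarrow> int d dvd (int 3 - int 1) * t)"
      using same[of 3 1] d4 e31 by simp
    have "tau 0 = 1 \<or> tau 0 = 2" "tau 1 = 1 \<or> tau 1 = 2" using tau12 d4 by auto
    thus ?thesis using s20 s31 e20 e31 n10 by auto
  qed
  have sh: "int d dvd s - int d div 2" using half_int[of "int d" s] evd d2 s_not by simp
  have th: "int d dvd t - int d div 2" using half_int[of "int d" t] evd d2 t_not by simp
  define e where "e = int d div 2"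
  obtain e0 where e0: "d = 2 * e0" using evd by blast
  have de: "int d = 2 * e" unfolding e_def e0 by simp
  have epos: "0 < e" using de dpos by simp
  have Ee: "E e = -1"
  proof -
    have "(E e)^2 = E (2 * e)" using Epower[of e 2] by simp
    also have "\<dots> = 1" using E1 de by simp
    finally have sq: "(E e)^2 = 1" .
    have "\<not> int d dvd e" using de epos zdvd_not_zless[of e "int d"] by simp
    hence "E e \<noteq> 1" using E1 by simp
    thus ?thesis using sq power2_eq_1_iff by blast
  qed
  obtain \<alpha> where al: "s - e = int d * \<alpha>" using sh unfolding e_def by blast
  obtain \<beta> where be: "t - e = int d * \<beta>" using th unfolding e_def by blast
  have p1: "(tau k1 = tau 0) = even k1" using par[of k1] k1 by simp
  have p2: "(tau k2 = tau 0) = even k2" using par[of k2] k2 by simp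
  have par12: "odd (k1 + k2)"
  proof (cases "tau 0 = 2")
    case True
    hence "even k1" "odd k2" using p1 p2 k1(2) k2(2) by simp_all
    thus ?thesis by simp
  next
    case False
    hence "tau 0 = 1" using tau12[OF dpos] by simp
    hence "odd k1" "even k2" using p1 p2 k1(2) k2(2) by simp_all
    thus ?thesis by simp
  qed
  hence "even (int k1 + int k2 + 1)" by simp
  then obtain w where w: "int k1 + int k2 + 1 = 2 * w" by (rule evenE)
  have b3: "b^3 = -1"
  proof -
    have "a^3 * b^3 = (a * b)^3" by (simp add: power_mult_distrib)
    also have "\<dots> = E (3 * (- (int k1 * s)))" using abE[OF k1] Epower by simp
    finally have "b^3 * E (int k2 * t - 2 * int k1 * s) = 1 * E (3 * (- (int k1 * s)))"
      using a3[OF k1 k2] by (simp add: mult.commute)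
    hence "b^3 = 1 * E (3 * (- (int k1 * s)) - (int k2 * t - 2 * int k1 * s))" by (rule Emv)
    also have "\<dots> = E e"
    proof -
      have "3 * (- (int k1 * s)) - (int k2 * t - 2 * int k1 * s) - e = int d * (- w - int k1 * \<alpha> - int k2 * \<beta>)"
      proof -
        have "s = e + int d * \<alpha>" "t = e + int d * \<beta>" using al be by simp_all
        hence "3 * (- (int k1 * s)) - (int k2 * t - 2 * int k1 * s) - e
             = - e * (int k1 + int k2 + 1) - int d * (int k1 * \<alpha> + int k2 * \<beta>)"
          by (simp add: algebra_simps)
        also have "\<dots> = int d * (- w - int k1 * \<alpha> - int k2 * \<beta>)" using w de by (simp add: algebra_simps)
        finally show ?thesis .
      qed
      thus ?thesis using Eeq by simp
    qed
    finally show ?thesis using Ee by simp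
  qed
  have abpm: "a = inverse b \<or> a = - inverse b"
  proof -
    have "(a * b)^2 = E (2 * (- (int k1 * s)))" using abE[OF k1] Epower by simp
    also have "\<dots> = 1"
    proof -
      have "int d dvd int k1 * (2 * s)" using d2 dvd_mult by blast
      hence "int d dvd 2 * (- (int k1 * s))" by (simp add: algebra_simps)
      thus ?thesis using E1 by blast
    qed
    finally have "a * b = 1 \<or> a * b = -1" using power2_eq_1_iff by blast
    thus ?thesis using ab by (auto simp: field_simps)
  qed
  have c1: "[j1 + j2 + 1 = d div 2] (mod d)"
  proof -
    have "int (j1 + j2 + 1) - int (d div 2) = s - e" unfolding s_def e_def by (simp add: zdiv_int)
    hence "[int (j1 + j2 + 1) = int (d div 2)] (mod int d)" using sh unfolding cong_iff_dvd_diff e_def by simp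
    thus ?thesis using cong_int_iff by blast
  qed
  have c2: "[2 * int j2 - int j1 + 1 = int d div 2] (mod int d)"
    using th unfolding cong_iff_dvd_diff t_def by (simp add: algebra_simps)
  have cpi: "\<forall>k<d. [int (pi k) + (r - 2 + int (tau k)) * int k = r * int k] (mod int d)"
  proof (intro allI impI)
    fix k assume kd: "k < d"
    have pk: "pi k < d" "lam k ^ 3 = eps ^ (pi k)" using pidef kd by auto
    from tau12[OF kd] show "[int (pi k) + (r - 2 + int (tau k)) * int k = r * int k] (mod int d)"
    proof
      assume tk: "tau k = 1"
      have "(a*eps^(j1*k))^3 * eps^k = E (int k * t - 2 * int k1 * s + (3 * int (j1*k) + int k))"
        unfolding A3 a3[OF k1 kd tk] by (simp only: EA)
      also have "int k * t - 2 * int k1 * s + (3 * int (j1*k) + int k) = (2 * s) * (int k - int k1)"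
        by (simp add: s_def t_def algebra_simps)
      also have "E ((2 * s) * (int k - int k1)) = 1" using d2 E1 by simp
      finally have h1: "(a*eps^(j1*k))^3 * eps^k = 1" .
      have l: "lam k * (a * eps^(j1*k)) = 1" using K2eq[OF kd tk] by simp
      have "eps ^ (pi k) = lam k ^ 3 * ((a*eps^(j1*k))^3 * eps^k)" using h1 pk by simp
      also have "\<dots> = (lam k * (a*eps^(j1*k)))^3 * eps^k" by (simp add: power_mult_distrib)
      finally have "eps ^ (pi k) = eps ^ k" using l by simp
      hence "E (int (pi k)) = E (int k)" using Epw by simp
      hence "int d dvd int (pi k) - int k" using Eeq by simp
      thus ?thesis unfolding cong_iff_dvd_diff using tk by (simp add: algebra_simps)
    next
      assume tk: "tau k = 2"
      have "lam k = 1" using K1eq[OF kd tk] by simp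
      hence "eps ^ (pi k) = 1" using pk by simp
      hence "pi k = 0" using eps pk(1) unfolding has_mult_order_def by (metis gr0I)
      thus ?thesis using tk by simp
    qed
  qed
  have "int d dvd (1 + 3 * int j1 - e)"
  proof -
    have h: "1 + 3 * int j1 - e = 2 * (s - e) - (t - e)" by (simp add: s_def t_def algebra_simps)
    have sh': "int d dvd s - e" using sh unfolding e_def .
    have th': "int d dvd t - e" using th unfolding e_def .
    have "int d dvd 2 * (s - e) - (t - e)" using dvd_diff[OF dvd_mult[OF sh'] th'] .
    thus ?thesis unfolding h .
  qed
  then obtain m1 where m1: "1 + 3 * int j1 - e = int d * m1" by blast
  have "int d dvd (2 + 3 * int j2 - int d)"
  proof -
    have h: "2 + 3 * int j2 - int d = (s - e) + (t - e)" using de by (simp add: s_def t_def algebra_simps)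
    have sh': "int d dvd s - e" using sh unfolding e_def .
    have th': "int d dvd t - e" using th unfolding e_def .
    have "int d dvd (s - e) + (t - e)" using dvd_add[OF sh' th'] .
    thus ?thesis unfolding h .
  qed
  then obtain m2 where "2 + 3 * int j2 - int d = int d * m2" by blast
  hence m2: "2 + 3 * int j2 = int d * (m2 + 1)" by (simp add: algebra_simps)
  have m1c: "m1 = 0 \<or> m1 = 1 \<or> m1 = 2"
  proof (rule m012[of "int d" "1 + 3 * int j1 - e"])
    show "0 < int d" using dpos by simp
    show "1 + 3 * int j1 - e = int d * m1" using m1 .
    show "- int d < 1 + 3 * int j1 - e" using de epos by linarith
    show "1 + 3 * int j1 - e < 3 * int d" using de epos j by linarith
  qed
  have m2c: "m2 + 1 = 0 \<or> m2 + 1 = 1 \<or> m2 + 1 = 2"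
  proof (rule m012[of "int d" "2 + 3 * int j2"])
    show "0 < int d" using dpos by simp
    show "2 + 3 * int j2 = int d * (m2 + 1)" using m2 .
    show "- int d < 2 + 3 * int j2" by linarith
    show "2 + 3 * int j2 < 3 * int d" using j by linarith
  qed
  define e' where "e' = d div 2"
  have de': "d = 2 * e'" using evd unfolding e'_def by simp
  have ie: "e = int e'" unfolding e_def e'_def by (simp add: zdiv_int)
  have x1: "1+3*j1 = e' \<or> 1+3*j1 = 3*e' \<or> 1+3*j1 = 5*e'"
  proof -
    have "int (1+3*j1) = int e' \<or> int (1+3*j1) = int (3*e') \<or> int (1+3*j1) = int (5*e')"
      using m1c m1 ie de' by auto
    thus ?thesis by (simp only: of_nat_eq_iff)
  qed
  have x2: "2+3*j2 = d \<or> 2+3*j2 = 2*d"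
  proof -
    have "m2 + 1 \<noteq> 0" using m2 by auto
    hence "int (2+3*j2) = int d \<or> int (2+3*j2) = int (2*d)"
      using m2c m2 by auto
    thus ?thesis by (simp only: of_nat_eq_iff)
  qed
  from fin[OF q3 de' x1 x2] have fn: "(q mod 18 = 5 \<and> 1+3*j1 = (q+1) div 6 \<and> 2+3*j2 = (q+1) div 3) \<or>
         (q mod 18 = 11 \<and> 1+3*j1 = 5*(q+1) div 6 \<and> 2+3*j2 = 2*(q+1) div 3)" .
  have r3: "[r = -1] (mod 3)" unfolding cong_iff_dvd_diff using rmod by presburger
  have fn2: "(q mod 18 = 5 \<and> 1 + monom a (1 + 3 * j1) + monom b (2 + 3 * j2)
        = 1 + monom a ((q + 1) div 6) + monom b ((q + 1) div 3)) \<or>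
     (q mod 18 = 11 \<and> 1 + monom a (1 + 3 * j1) + monom b (2 + 3 * j2)
        = 1 + monom a (5 * (q + 1) div 6) + monom b (2 * (q + 1) div 3))"
    using fn by (elim disjE) simp_all
  show ?thesis by (intro conjI) (fact r3 evd sets b3 abpm c1 c2 cpi fn2)+
qed

end
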